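(* Let $K$ be a field, $S=K[x_1,\dots,x_n]$, $A\subseteq\{1,\dots,n\}$ and $f=\prod_{j\in A}x_j$. For $L\subseteq A$ let $f_L=\prod_{l\in L}x_l$ and $Z_L=\{x_l^{-1}: l\in L\}\cup\{x_l: l\notin L\}$. Then $$S_f=\bigoplus_{L\subseteq A}f_L^{-1}K[Z_L]$$ is a Stanley decomposition of $S_f$.
   Context: $S_f=K[x_1,\dots,x_n,x_j^{-1}:j\in A]$, with $K$-basis the monomials $x_1^{a_1}\cdots x_n^{a_n}$, $a_j\in\mathbb Z$ for $j\in A$, $a_j\in\mathbb N$ for $j\notin A$. For a monomial $u\in S_f$ and $Z\subseteq\{x_1,\dots,x_n\}\cup\{x_j^{-1}:j\in A\}$ with $\{x_j,x_j^{-1}\}\not\subseteq Z$ for all $j\in A$, $uK[Z]$ is the $K$-span of all $uw$, $w$ a monomial in the elements of $Z$; it is a Stanley space if it is a free $K[Z]$-submodule. A Stanley decomposition of $S_f$ is an expression of $S_f$ as a finite direct sum (of $K$-vector spaces) of Stanley spaces. *)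

theory Defs
  imports Main "HOL-Library.Poly_Mapping"
begin

text \<open>Laurent monomials in x_1..x_n are exponent vectors (nat =>0 int);
  Laurent polynomials over K are finitely supported maps from exponent vectors to K,
  with the convolution product of Poly_Mapping (so monomial a * monomial b = monomial (a+b)).\<close>

type_synonym expo = "nat \<Rightarrow>\<^sub>0 int"
type_synonym 'k lpoly = "expo \<Rightarrow>\<^sub>0 'k"

definition mono :: "expo \<Rightarrow> 'k::field lpoly" where
  "mono e = Poly_Mapping.single e 1"

definition var_exp :: "nat \<Rightarrow> expo" where
  "var_exp j = Poly_Mapping.single j 1"

text \<open>Exponents of the monomial K-basis of S_f, f = prod_{j in A} x_j.\<close>
definition Sf_exps :: "nat \<Rightarrow> nat set \<Rightarrow> expo set" where
  "Sf_exps n A = {a. Poly_Mapping.keys a \<subseteq> {1..n} \<and> (\<forall>j\<in>{1..n} - A. 0 \<le> Poly_Mapping.lookup a j)}"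

definition Sf :: "nat \<Rightarrow> nat set \<Rightarrow> 'k::field lpoly set" where
  "Sf n A = {p. Poly_Mapping.keys p \<subseteq> Sf_exps n A}"

definition admissible_Z :: "nat \<Rightarrow> nat set \<Rightarrow> expo set \<Rightarrow> bool" where
  "admissible_Z n A Z \<longleftrightarrow>
     Z \<subseteq> {var_exp j | j. j \<in> {1..n}} \<union> {- var_exp j | j. j \<in> A} \<and>
     (\<forall>j\<in>A. \<not> (var_exp j \<in> Z \<and> - var_exp j \<in> Z))"

inductive_set Z_monos :: "expo set \<Rightarrow> expo set" for Z where
  zero: "0 \<in> Z_monos Z"
| step: "e \<in> Z_monos Z \<Longrightarrow> z \<in> Z \<Longrightarrow> e + z \<in> Z_monos Z"

definition KZ :: "expo set \<Rightarrow> 'k::field lpoly set" where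
  "KZ Z = {p. Poly_Mapping.keys p \<subseteq> Z_monos Z}"

definition uKZ :: "expo \<Rightarrow> expo set \<Rightarrow> 'k::field lpoly set" where
  "uKZ u Z = {mono u * p | p. p \<in> KZ Z}"

definition free_submodule :: "'k::field lpoly set \<Rightarrow> 'k lpoly set \<Rightarrow> bool" where
  "free_submodule R M \<longleftrightarrow>
     (\<exists>B \<subseteq> M.
        M = {\<Sum>b\<in>F. c b * b | F c. finite F \<and> F \<subseteq> B \<and> (\<forall>b\<in>F. c b \<in> R)} \<and>
        (\<forall>F c. finite F \<and> F \<subseteq> B \<and> (\<forall>b\<in>F. c b \<in> R) \<and> (\<Sum>b\<in>F. c b * b) = 0
               \<longrightarrow> (\<forall>b\<in>F. c b = 0)))"

definition stanley_space :: "nat \<Rightarrow> nat set \<Rightarrow> expo \<Rightarrow> expo set \<Rightarrow> 'k::field itself \<Rightarrow> bool" where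
  "stanley_space n A u Z _ \<longleftrightarrow>
     u \<in> Sf_exps n A \<and> admissible_Z n A Z \<and>
     free_submodule (KZ Z :: 'k lpoly set) (uKZ u Z)"

definition direct_sum_of :: "'k::field lpoly set \<Rightarrow> 'i set \<Rightarrow> ('i \<Rightarrow> 'k lpoly set) \<Rightarrow> bool" where
  "direct_sum_of W I V \<longleftrightarrow> finite I \<and> (\<forall>i\<in>I. V i \<subseteq> W) \<and>
     (\<forall>p\<in>W. \<exists>!v. (\<forall>i\<in>I. v i \<in> V i) \<and> (\<forall>i. i \<notin> I \<longrightarrow> v i = 0) \<and> p = (\<Sum>i\<in>I. v i))"

definition stanley_decomposition ::
    "nat \<Rightarrow> nat set \<Rightarrow> 'i set \<Rightarrow> ('i \<Rightarrow> expo) \<Rightarrow> ('i \<Rightarrow> expo set) \<Rightarrow> 'k::field itself \<Rightarrow> bool" where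
  "stanley_decomposition n A I u Z K \<longleftrightarrow>
     direct_sum_of (Sf n A :: 'k lpoly set) I (\<lambda>i. uKZ (u i) (Z i)) \<and>
     (\<forall>i\<in>I. stanley_space n A (u i) (Z i) K)"

definition fL_inv_exp :: "nat set \<Rightarrow> expo" where
  "fL_inv_exp L = - (\<Sum>l\<in>L. var_exp l)"

definition Z_L :: "nat \<Rightarrow> nat set \<Rightarrow> expo set" where
  "Z_L n L = {- var_exp l | l. l \<in> L} \<union> {var_exp l | l. l \<in> {1..n} - L}"

end

theory Submission imports Defs begin

lemma lookup_mono_mult:
  "Poly_Mapping.lookup (mono u * (p::'k::field lpoly)) a = Poly_Mapping.lookup p (a - u)"
proof -
  have "Poly_Mapping.lookup (mono u * p) a =
     (\<Sum>l. (1 when u = l) * (\<Sum>q. Poly_Mapping.lookup p q when a = l + q))"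
    unfolding mono_def lookup_mult lookup_single ..
  also have "\<dots> = (\<Sum>q. Poly_Mapping.lookup p q when a = u + q)"
    by (simp only: when_mult mult_1 Sum_any_when_equal')
  also have "\<dots> = (\<Sum>q. Poly_Mapping.lookup p q when q = a - u)"
    by (rule Sum_any.cong) (auto simp: when_def)
  also have "\<dots> = Poly_Mapping.lookup p (a - u)" by simp
  finally show ?thesis .
qed

abbreviation "lk \<equiv> Poly_Mapping.lookup"
abbreviation "ks \<equiv> Poly_Mapping.keys"

definition restr :: "'k::field lpoly \<Rightarrow> expo set \<Rightarrow> 'k lpoly" where
  "restr p E = (\<Sum>a\<in>ks p \<inter> E. Poly_Mapping.single a (lk p a))"

lemma lookup_restr: "lk (restr p E) b = (if b \<in> E then lk p b else 0)"
proof -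
  have "lk (restr p E) b = (\<Sum>a\<in>ks p \<inter> E. if a = b then lk p a else 0)"
    unfolding restr_def lookup_sum by (intro sum.cong) (auto simp: lookup_single when_def)
  also have "\<dots> = (if b \<in> ks p \<inter> E then lk p b else 0)"
    by (simp add: sum.delta')
  finally show ?thesis by (auto simp: in_keys_iff)
qed

lemma lookup_fL: "finite L \<Longrightarrow> lk (fL_inv_exp L) j = (if j \<in> L then -1 else 0)"
  unfolding fL_inv_exp_def var_exp_def
  by (simp add: lookup_sum lookup_single when_def lookup_minus)

lemma lookup_var: "lk (var_exp l) j = (if j = l then 1 else 0)"
  unfolding var_exp_def by (simp add: lookup_single when_def)

definition Eset :: "nat \<Rightarrow> nat set \<Rightarrow> expo set" where
  "Eset n L = {a. \<forall>j. (j \<notin> {1..n} \<longrightarrow> lk a j = 0) \<and> (j \<in> L \<longrightarrow> lk a j < 0)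
      \<and> (j \<in> {1..n} - L \<longrightarrow> lk a j \<ge> 0)}"

definition Zset :: "nat \<Rightarrow> nat set \<Rightarrow> expo set" where
  "Zset n L = {a. \<forall>j. (j \<notin> {1..n} \<longrightarrow> lk a j = 0) \<and> (j \<in> L \<longrightarrow> lk a j \<le> 0)
      \<and> (j \<in> {1..n} - L \<longrightarrow> lk a j \<ge> 0)}"

lemma Zmonos_sub: "e \<in> Z_monos (Z_L n L) \<Longrightarrow> L \<subseteq> {1..n} \<Longrightarrow> e \<in> Zset n L"
proof (induction e rule: Z_monos.induct)
  case zero then show ?case by (simp add: Zset_def)
next
  case (step e z)
  from step.IH step.prems have ez: "\<forall>j. (j \<notin> {1..n} \<longrightarrow> lk e j = 0) \<and> (j \<in> L \<longrightarrow> lk e j \<le> 0)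
      \<and> (j \<in> {1..n} - L \<longrightarrow> lk e j \<ge> 0)" by (simp add: Zset_def)
  from step.hyps(2) obtain l where "(z = - var_exp l \<and> l \<in> L) \<or> (z = var_exp l \<and> l \<in> {1..n} - L)"
    unfolding Z_L_def by blast
  then show ?case
  proof
    assume h: "z = - var_exp l \<and> l \<in> L"
    with step.prems have "l \<in> {1..n}" by blast
    with h ez show ?thesis unfolding Zset_def
      by (auto simp: lookup_add lookup_minus lookup_var)
  next
    assume h: "z = var_exp l \<and> l \<in> {1..n} - L"
    with ez show ?thesis unfolding Zset_def
      by (auto simp: lookup_add lookup_minus lookup_var)
  qed
qed

lemma Zmonos_add: "f \<in> Z_monos Z \<Longrightarrow> e \<in> Z_monos Z \<Longrightarrow> e + f \<in> Z_monos Z"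
proof (induction f rule: Z_monos.induct)
  case zero then show ?case by simp
next
  case (step f z)
  then show ?case using Z_monos.step[of "e + f" Z z] by (simp add: add.assoc)
qed


lemma Zmonos_single_nat:
  assumes "Poly_Mapping.single j s \<in> Z"
  shows "Poly_Mapping.single j (int m * s) \<in> Z_monos Z"
proof (induction m)
  case 0 then show ?case by (simp add: Z_monos.zero)
next
  case (Suc m)
  have "Poly_Mapping.single j (int (Suc m) * s) = Poly_Mapping.single j (int m * s) + Poly_Mapping.single j s"
    by (simp add: single_add[symmetric] algebra_simps)
  then show ?case using Z_monos.step[OF Suc assms] by simp
qed

lemma Zmonos_sum: "finite I \<Longrightarrow> (\<forall>i\<in>I. g i \<in> Z_monos Z) \<Longrightarrow> sum g I \<in> Z_monos Z"
  by (induction I rule: finite_induct) (auto intro: Zmonos_add Z_monos.zero)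

lemma Zmonos_sup: "L \<subseteq> {1..n} \<Longrightarrow> e \<in> Zset n L \<Longrightarrow> e \<in> Z_monos (Z_L n L)"
proof -
  assume L: "L \<subseteq> {1..n}" and e: "e \<in> Zset n L"
  have eq: "e = (\<Sum>j\<in>{1..n}. Poly_Mapping.single j (lk e j))"
  proof (rule poly_mapping_eqI)
    fix k
    show "lk e k = lk (\<Sum>j\<in>{1..n}. Poly_Mapping.single j (lk e j)) k"
      using e unfolding lookup_sum by (auto simp: lookup_single when_def Zset_def)
  qed
  have "\<forall>j\<in>{1..n}. Poly_Mapping.single j (lk e j) \<in> Z_monos (Z_L n L)"
  proof
    fix j assume j: "j \<in> {1..n}"
    show "Poly_Mapping.single j (lk e j) \<in> Z_monos (Z_L n L)"
    proof (cases "j \<in> L")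
      case True
      have "Poly_Mapping.single j (-1) \<in> Z_L n L"
        using True unfolding Z_L_def var_exp_def by (auto simp: single_uminus)
      from Zmonos_single_nat[OF this, of "nat (- lk e j)"] True e show ?thesis
        by (auto simp: Zset_def)
    next
      case False
      have "Poly_Mapping.single j 1 \<in> Z_L n L"
        using False j unfolding Z_L_def var_exp_def by auto
      from Zmonos_single_nat[OF this, of "nat (lk e j)"] False j e show ?thesis
        by (auto simp: Zset_def)
    qed
  qed
  then show ?thesis by (subst eq) (rule Zmonos_sum, auto)
qed

lemma Zmonos_eq: "L \<subseteq> {1..n} \<Longrightarrow> Z_monos (Z_L n L) = Zset n L"
  using Zmonos_sub Zmonos_sup by blast


lemma mono_mult_mono: "mono a * (mono b :: 'k::field lpoly) = mono (a + b)"
  unfolding mono_def by (simp add: mult_single)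

lemma mono_zero: "mono 0 = (1 :: 'k::field lpoly)"
  unfolding mono_def by simp

lemma uKZ_char:
  assumes L: "L \<subseteq> {1..n}"
  shows "(uKZ (fL_inv_exp L) (Z_L n L) :: 'k::field lpoly set) = {p. ks p \<subseteq> Eset n L}"
proof -
  have fin: "finite L" using L finite_subset by blast
  let ?u = "fL_inv_exp L"
  have lu: "\<And>j. lk ?u j = (if j \<in> L then -1 else 0)" using lookup_fL[OF fin] .
  have E_iff: "a \<in> Eset n L \<longleftrightarrow> a - ?u \<in> Zset n L" for a
  proof -
    have P: "((j \<notin> {1..n} \<longrightarrow> lk a j = 0) \<and> (j \<in> L \<longrightarrow> lk a j < 0) \<and> (j \<in> {1..n} - L \<longrightarrow> lk a j \<ge> 0)) \<longleftrightarrow>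
       ((j \<notin> {1..n} \<longrightarrow> lk (a - ?u) j = 0) \<and> (j \<in> L \<longrightarrow> lk (a - ?u) j \<le> 0) \<and> (j \<in> {1..n} - L \<longrightarrow> lk (a - ?u) j \<ge> 0))" for j
    proof (cases "j \<in> L")
      case True
      then have "j \<in> {1..n}" using L by blast
      with True show ?thesis by (simp add: lookup_minus lu) presburger
    next
      case False
      then show ?thesis by (simp add: lookup_minus lu)
    qed
    show ?thesis unfolding Eset_def Zset_def mem_Collect_eq by (simp only: P)
  qed
  show ?thesis
  proof (intro set_eqI iffI)
    fix q :: "'k lpoly" assume "q \<in> uKZ ?u (Z_L n L)"
    then obtain p where q: "q = mono ?u * p" and p: "ks p \<subseteq> Zset n L"
      unfolding uKZ_def KZ_def using Zmonos_eq[OF L] by auto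
    show "q \<in> {p. ks p \<subseteq> Eset n L}"
    proof (clarsimp)
      fix a assume "a \<in> ks q"
      then have "lk p (a - ?u) \<noteq> 0" by (simp add: q lookup_mono_mult in_keys_iff)
      then have "a - ?u \<in> Zset n L" using p by (auto simp: in_keys_iff)
      then show "a \<in> Eset n L" using E_iff by blast
    qed
  next
    fix q :: "'k lpoly" assume q: "q \<in> {p. ks p \<subseteq> Eset n L}"
    define p where "p = mono (- ?u) * q"
    have "mono ?u * p = q" unfolding p_def
      by (simp add: mult.assoc[symmetric] mono_mult_mono mono_zero)
    moreover have "ks p \<subseteq> Zset n L"
    proof
      fix b assume "b \<in> ks p"
      then have "lk q (b + ?u) \<noteq> 0" by (simp add: p_def lookup_mono_mult in_keys_iff)
      then have "b + ?u \<in> Eset n L" using q by (auto simp: in_keys_iff)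
      then show "b \<in> Zset n L" using E_iff[of "b + ?u"] by simp
    qed
    ultimately show "q \<in> uKZ ?u (Z_L n L)"
      unfolding uKZ_def KZ_def using Zmonos_eq[OF L] by auto
  qed
qed


lemma Eset_sub_Sf: "L \<subseteq> A \<Longrightarrow> Eset n L \<subseteq> Sf_exps n A"
proof
  fix a assume LA: "L \<subseteq> A" and "a \<in> Eset n L"
  then have h: "\<forall>j. (j \<notin> {1..n} \<longrightarrow> lk a j = 0) \<and> (j \<in> L \<longrightarrow> lk a j < 0) \<and> (j \<in> {1..n} - L \<longrightarrow> lk a j \<ge> 0)"
    unfolding Eset_def by blast
  have "ks a \<subseteq> {1..n}"
  proof
    fix j assume "j \<in> ks a"
    then have "lk a j \<noteq> 0" by (simp add: in_keys_iff)
    with h show "j \<in> {1..n}" by blast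
  qed
  moreover have "\<forall>j\<in>{1..n} - A. 0 \<le> lk a j"
    using h LA by blast
  ultimately show "a \<in> Sf_exps n A" unfolding Sf_exps_def by blast
qed

lemma Eset_unique:
  assumes "a \<in> Eset n L" "a \<in> Eset n L'" "L \<subseteq> {1..n}" "L' \<subseteq> {1..n}"
  shows "L = L'"
proof
  show "L \<subseteq> L'"
  proof
    fix j assume j: "j \<in> L"
    with assms(1) have "lk a j < 0" unfolding Eset_def by blast
    moreover have "j \<in> {1..n}" using j assms(3) by blast
    moreover from assms(2) have "j \<in> {1..n} - L' \<longrightarrow> 0 \<le> lk a j" unfolding Eset_def by blast
    ultimately show "j \<in> L'" by auto
  qed
  show "L' \<subseteq> L"
  proof
    fix j assume j: "j \<in> L'"
    with assms(2) have "lk a j < 0" unfolding Eset_def by blast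
    moreover have "j \<in> {1..n}" using j assms(4) by blast
    moreover from assms(1) have "j \<in> {1..n} - L \<longrightarrow> 0 \<le> lk a j" unfolding Eset_def by blast
    ultimately show "j \<in> L" by auto
  qed
qed

lemma Sf_cover:
  assumes "a \<in> Sf_exps n A"
  shows "a \<in> Eset n {j\<in>A. lk a j < 0}"
proof -
  have k: "ks a \<subseteq> {1..n}" and nn: "\<forall>j\<in>{1..n} - A. 0 \<le> lk a j"
    using assms unfolding Sf_exps_def by auto
  have z: "j \<notin> {1..n} \<Longrightarrow> lk a j = 0" for j using k by (auto simp: in_keys_iff)
  show ?thesis unfolding Eset_def using z nn by force
qed


lemma sum_lookup_single:
  assumes fin: "finite A" and A: "A \<subseteq> {1..n}"
    and v: "\<forall>L\<in>Pow A. ks (v L :: 'k::field lpoly) \<subseteq> Eset n L"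
    and L0: "L0 \<in> Pow A" and b: "b \<in> Eset n L0"
  shows "lk (\<Sum>L\<in>Pow A. v L) b = lk (v L0) b"
proof -
  have "lk (\<Sum>L\<in>Pow A. v L) b = (\<Sum>L\<in>Pow A. lk (v L) b)" by (simp add: lookup_sum)
  also have "\<dots> = lk (v L0) b + (\<Sum>L\<in>Pow A - {L0}. lk (v L) b)"
    using fin L0 by (simp add: sum.remove)
  also have "(\<Sum>L\<in>Pow A - {L0}. lk (v L) b) = 0"
  proof (rule sum.neutral, rule ballI)
    fix L assume L: "L \<in> Pow A - {L0}"
    have "b \<notin> Eset n L"
    proof
      assume "b \<in> Eset n L"
      with b have "L = L0" using Eset_unique[of b n L L0] L L0 A by blast
      with L show False by blast
    qed
    then have "b \<notin> ks (v L)" using v L by blast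
    then show "lk (v L) b = 0" by (simp add: in_keys_iff)
  qed
  finally show ?thesis by simp
qed

lemma sum_lookup_none:
  assumes v: "\<forall>L\<in>Pow A. ks (v L :: 'k::field lpoly) \<subseteq> Eset n L"
    and b: "\<forall>L\<in>Pow A. b \<notin> Eset n L"
  shows "lk (\<Sum>L\<in>Pow A. v L) b = 0"
proof -
  have "lk (\<Sum>L\<in>Pow A. v L) b = (\<Sum>L\<in>Pow A. lk (v L) b)" by (simp add: lookup_sum)
  also have "\<dots> = 0"
  proof (rule sum.neutral, rule ballI)
    fix L assume L: "L \<in> Pow A"
    then have "b \<notin> ks (v L)" using v b by blast
    then show "lk (v L) b = 0" by (simp add: in_keys_iff)
  qed
  finally show ?thesis .
qed

theorem proposition2p1:
  fixes n :: nat and A :: "nat set"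
  assumes "A \<subseteq> {1..n}"
  shows "stanley_decomposition n A (Pow A) fL_inv_exp (Z_L n) TYPE('k::field)"
proof -
  have fin: "finite A" using assms finite_subset by blast
  have LA: "L \<in> Pow A \<Longrightarrow> L \<subseteq> {1..n}" for L using assms by blast
  have V: "L \<in> Pow A \<Longrightarrow> (uKZ (fL_inv_exp L) (Z_L n L) :: 'k lpoly set) = {p. ks p \<subseteq> Eset n L}" for L
    using uKZ_char[OF LA] by blast
  have ds: "direct_sum_of (Sf n A :: 'k lpoly set) (Pow A) (\<lambda>L. uKZ (fL_inv_exp L) (Z_L n L))"
    unfolding direct_sum_of_def
  proof (intro conjI ballI)
    show "finite (Pow A)" using fin by simp
  next
    fix L assume L: "L \<in> Pow A"
    show "(uKZ (fL_inv_exp L) (Z_L n L) :: 'k lpoly set) \<subseteq> Sf n A"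
      unfolding V[OF L] Sf_def using Eset_sub_Sf[of L A n] L by blast
  next
    fix p :: "'k lpoly" assume p: "p \<in> Sf n A"
    define v where "v = (\<lambda>L. if L \<in> Pow A then restr p (Eset n L) else 0)"
    have vk: "\<forall>L\<in>Pow A. ks (v L) \<subseteq> Eset n L"
      by (auto simp: v_def in_keys_iff lookup_restr split: if_splits)
    have good: "(\<forall>L\<in>Pow A. w L \<in> uKZ (fL_inv_exp L) (Z_L n L)) \<longleftrightarrow> (\<forall>L\<in>Pow A. ks (w L) \<subseteq> Eset n L)"
      for w :: "nat set \<Rightarrow> 'k lpoly"
      using V by auto
    have psum: "p = (\<Sum>L\<in>Pow A. v L)"
    proof (rule poly_mapping_eqI)
      fix b
      show "lk p b = lk (\<Sum>L\<in>Pow A. v L) b"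
      proof (cases "b \<in> ks p")
        case True
        then have bS: "b \<in> Sf_exps n A" using p unfolding Sf_def by blast
        let ?L0 = "{j\<in>A. lk b j < 0}"
        have L0: "?L0 \<in> Pow A" by blast
        have bE: "b \<in> Eset n ?L0" using Sf_cover[OF bS] .
        show ?thesis using sum_lookup_single[OF fin assms vk L0 bE] L0 bE
          by (simp add: v_def lookup_restr)
      next
        case False
        then have "lk p b = 0" by (simp add: in_keys_iff)
        moreover have "lk (\<Sum>L\<in>Pow A. v L) b = (\<Sum>L\<in>Pow A. lk (v L) b)" by (simp add: lookup_sum)
        moreover have "\<dots> = 0" using \<open>lk p b = 0\<close> by (intro sum.neutral) (simp add: v_def lookup_restr)
        ultimately show ?thesis by simp
      qed
    qed
    have uniq: "w = v" if w1: "\<forall>L\<in>Pow A. ks (w L) \<subseteq> Eset n L" and w2: "\<forall>L. L \<notin> Pow A \<longrightarrow> w L = 0"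
      and w3: "p = (\<Sum>L\<in>Pow A. w L)" for w
    proof
      fix L show "w L = v L"
      proof (cases "L \<in> Pow A")
        case False then show ?thesis using w2 by (simp add: v_def)
      next
        case True
        show ?thesis
        proof (rule poly_mapping_eqI)
          fix b show "lk (w L) b = lk (v L) b"
          proof (cases "b \<in> Eset n L")
            case True2: True
            have "lk (w L) b = lk p b" using sum_lookup_single[OF fin assms w1 True True2] w3 by simp
            then show ?thesis using True True2 by (simp add: v_def lookup_restr)
          next
            case False
            then have "b \<notin> ks (w L)" using w1 True by blast
            then show ?thesis using True False by (simp add: v_def lookup_restr in_keys_iff)
          qed
        qed
      qed
    qed
    show "\<exists>!v. (\<forall>i\<in>Pow A. v i \<in> uKZ (fL_inv_exp i) (Z_L n i)) \<and> (\<forall>i. i \<notin> Pow A \<longrightarrow> v i = 0) \<and> p = (\<Sum>i\<in>Pow A. v i)"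
    proof (rule ex1I[of _ v])
      show "(\<forall>i\<in>Pow A. v i \<in> uKZ (fL_inv_exp i) (Z_L n i)) \<and> (\<forall>i. i \<notin> Pow A \<longrightarrow> v i = 0) \<and> p = (\<Sum>i\<in>Pow A. v i)"
      proof (intro conjI)
        show "\<forall>i\<in>Pow A. v i \<in> uKZ (fL_inv_exp i) (Z_L n i)" using vk good[of v] by blast
        show "\<forall>i. i \<notin> Pow A \<longrightarrow> v i = 0" by (simp add: v_def)
        show "p = (\<Sum>i\<in>Pow A. v i)" by (rule psum)
      qed
    next
      fix w assume "(\<forall>i\<in>Pow A. w i \<in> uKZ (fL_inv_exp i) (Z_L n i)) \<and> (\<forall>i. i \<notin> Pow A \<longrightarrow> w i = 0) \<and> p = (\<Sum>i\<in>Pow A. w i)"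
      then show "w = v" using uniq[of w] good[of w] by blast
    qed
  qed
  have ss: "stanley_space n A (fL_inv_exp L) (Z_L n L) TYPE('k)" if L: "L \<in> Pow A" for L
  proof -
    have Ln: "L \<subseteq> {1..n}" using LA[OF L] .
    have finL: "finite L" using Ln finite_subset by blast
    let ?u = "fL_inv_exp L"
    have "?u \<in> Eset n L" unfolding Eset_def using Ln by (auto simp: lookup_fL[OF finL])
    then have u: "?u \<in> Sf_exps n A" using Eset_sub_Sf[of L A n] L by blast
    have vne: "var_exp j \<noteq> - var_exp l" for j l
    proof
      assume "var_exp j = - var_exp l"
      then have "lk (var_exp j) j = lk (- var_exp l) j" by simp
      then show False by (simp add: lookup_var lookup_minus split: if_splits)
    qed
    have vinj: "var_exp j = var_exp l \<Longrightarrow> j = l" for j l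
      unfolding var_exp_def by (metis lookup_single_eq lookup_single_not_eq zero_neq_one)
    have adm: "admissible_Z n A (Z_L n L)"
      unfolding admissible_Z_def
    proof (intro conjI ballI)
      show "Z_L n L \<subseteq> {var_exp j |j. j \<in> {1..n}} \<union> {- var_exp j |j. j \<in> A}"
        unfolding Z_L_def using L by blast
    next
      fix j assume "j \<in> A"
      show "\<not> (var_exp j \<in> Z_L n L \<and> - var_exp j \<in> Z_L n L)"
      proof
        assume h: "var_exp j \<in> Z_L n L \<and> - var_exp j \<in> Z_L n L"
        from h have "j \<notin> L" unfolding Z_L_def using vne vinj by blast
        moreover from h have "j \<in> L" unfolding Z_L_def using vne vinj
          by (auto simp: minus_equation_iff[of "var_exp j"]) (metis minus_minus vne)
        ultimately show False by blast
      qed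
    qed
    have inv: "mono (- ?u) * mono ?u = (1::'k lpoly)" by (simp add: mono_mult_mono mono_zero)
    have free: "free_submodule (KZ (Z_L n L) :: 'k lpoly set) (uKZ ?u (Z_L n L))"
      unfolding free_submodule_def
    proof (intro exI[of _ "{mono ?u}"] conjI allI impI)
      show "{mono ?u} \<subseteq> (uKZ ?u (Z_L n L) :: 'k lpoly set)"
        unfolding uKZ_def KZ_def using Z_monos.zero by (auto intro!: exI[of _ 1])
      show "(uKZ ?u (Z_L n L) :: 'k lpoly set) = {\<Sum>b\<in>F. c b * b |F c. finite F \<and> F \<subseteq> {mono ?u} \<and> (\<forall>b\<in>F. c b \<in> KZ (Z_L n L))}"
      proof (intro set_eqI iffI)
        fix x :: "'k lpoly" assume "x \<in> uKZ ?u (Z_L n L)"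
        then obtain p where "x = mono ?u * p" "p \<in> KZ (Z_L n L)" unfolding uKZ_def by blast
        then show "x \<in> {\<Sum>b\<in>F. c b * b |F c. finite F \<and> F \<subseteq> {mono ?u} \<and> (\<forall>b\<in>F. c b \<in> KZ (Z_L n L))}"
          by (intro CollectI exI[of _ "{mono ?u}"] exI[of _ "\<lambda>_. p"]) (simp add: mult.commute)
      next
        fix x :: "'k lpoly" assume "x \<in> {\<Sum>b\<in>F. c b * b |F c. finite F \<and> F \<subseteq> {mono ?u} \<and> (\<forall>b\<in>F. c b \<in> KZ (Z_L n L))}"
        then obtain F c where x: "x = (\<Sum>b\<in>F. c b * b)" and F: "F \<subseteq> {mono ?u}" and c: "\<forall>b\<in>F. c b \<in> KZ (Z_L n L)"
          by blast
        show "x \<in> uKZ ?u (Z_L n L)"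
        proof (cases "F = {}")
          case True
          then show ?thesis using x unfolding uKZ_def KZ_def by (auto intro!: exI[of _ 0])
        next
          case False
          then have "F = {mono ?u}" using F by blast
          then show ?thesis using x c unfolding uKZ_def by (auto simp: mult.commute)
        qed
      qed
    next
      fix F c assume h: "finite F \<and> F \<subseteq> {mono ?u} \<and> (\<forall>b\<in>F. c b \<in> (KZ (Z_L n L) :: 'k lpoly set)) \<and> (\<Sum>b\<in>F. c b * b) = 0"
      show "\<forall>b\<in>F. c b = 0"
      proof
        fix b assume b: "b \<in> F"
        then have Fe: "F = {mono ?u}" "b = mono ?u" using h by blast+
        then have "c b * mono ?u = 0" using h by simp
        then have "c b * mono ?u * mono (- ?u) = 0" by simp
        moreover have "c b * mono ?u * mono (- ?u) = c b * (mono (- ?u) * mono ?u)"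
          by (simp only: mult.assoc mult.commute[of "mono ?u"])
        ultimately show "c b = 0" using inv by simp
      qed
    qed
    show ?thesis unfolding stanley_space_def using u adm free by blast
  qed
  show ?thesis unfolding stanley_decomposition_def using ds ss by blast
qed

end
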